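(* Let $\varepsilon>0$ and let $k\ge2$ be even. There exist a threshold $\theta$, a sequence $Q$ of $k$ counting queries (each of sensitivity $1$), and datasets such that BinarySVT$(\cdot,Q,\theta,\lambda)$ (described below) does not satisfy $\varepsilon$-differential privacy whenever $\lambda\le\frac{k}{4\varepsilon}$.
   Context: $\mathrm{Lap}(\lambda)$ is the Laplace distribution with density $\frac{1}{2\lambda}e^{-|y|/\lambda}$. A dataset is a finite multiset of tuples; two datasets are neighboring if one is obtained by inserting one tuple into the other. A counting query $q$ maps a dataset to the number of its tuples satisfying some predicate. BinarySVT$(D,Q=(q_1,\dots,q_k),\theta,\lambda)$: draw $\hat\theta=\theta+\mathrm{Lap}(\lambda)$ once; then for $i=1,\dots,k$ draw $\hat q_i(D)=q_i(D)+\mathrm{Lap}(\lambda)$ (all noises independent) and output $o_i=1$ if $\hat q_i(D)>\hat\theta$ and $o_i=0$ otherwise. The output is $(o_1,\dots,o_k)$. An algorithm $\mathcal{A}$ is $\varepsilon$-differentially private if for all neighboring $D,D'$ and all outputs $O$, $\Pr[\mathcal{A}(D)=O]\le e^{\varepsilon}\Pr[\mathcal{A}(D')=O]$. *)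

theory Defs
  imports "HOL-Probability.Probability" "HOL-Library.Multiset"
begin

definition lap_density :: "real \<Rightarrow> real \<Rightarrow> real" where
  "lap_density lam y = exp (- \<bar>y\<bar> / lam) / (2 * lam)"

definition laplace :: "real \<Rightarrow> real measure" where
  "laplace lam = density lborel (\<lambda>y. ennreal (lap_density lam y))"

definition neighboring :: "'a multiset \<Rightarrow> 'a multiset \<Rightarrow> bool" where
  "neighboring D D' \<longleftrightarrow> (\<exists>x. D' = add_mset x D) \<or> (\<exists>x. D = add_mset x D')"

definition counting_query :: "('a \<Rightarrow> bool) \<Rightarrow> 'a multiset \<Rightarrow> real" where
  "counting_query P D = real (size (filter_mset P D))"

text \<open>BinarySVT: noise coordinate 0 is the threshold noise, coordinate i+1 is the
  noise of query i (all independent Lap(lambda)). The output is the list (o_1,...,o_k).\<close>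
definition svt_output :: "('a \<Rightarrow> bool) list \<Rightarrow> real \<Rightarrow> 'a multiset \<Rightarrow> (nat \<Rightarrow> real) \<Rightarrow> bool list" where
  "svt_output Q \<theta> D z =
     map (\<lambda>i. counting_query (Q ! i) D + z (Suc i) > \<theta> + z 0) [0..<length Q]"

definition binary_svt :: "'a multiset \<Rightarrow> ('a \<Rightarrow> bool) list \<Rightarrow> real \<Rightarrow> real \<Rightarrow> bool list measure" where
  "binary_svt D Q \<theta> lam =
     distr (PiM {..length Q} (\<lambda>_. laplace lam)) (count_space UNIV) (svt_output Q \<theta> D)"

definition differentially_private :: "('a multiset \<Rightarrow> 'b measure) \<Rightarrow> real \<Rightarrow> bool" where
  "differentially_private A eps \<longleftrightarrow>
     (\<forall>D D' out. neighboring D D' \<longrightarrow> measure (A D) {out} \<le> exp eps * measure (A D') {out})"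

end

theory Submission
  imports Defs
begin


lemma lap_density_nonneg: "lam > 0 \<Longrightarrow> 0 \<le> lap_density lam y"
  by (simp add: lap_density_def)

lemma lap_density_meas[measurable]: "lap_density lam \<in> borel_measurable borel"
  unfolding lap_density_def by measurable

lemma lap_upper:
  assumes lam: "lam > 0" and a: "a \<ge> 0"
  shows "(\<integral>\<^sup>+y. ennreal (lap_density lam y) * indicator {a..} y \<partial>lborel) = ennreal (exp (-a/lam)/2)"
proof -
  have "(\<integral>\<^sup>+y. ennreal (lap_density lam y) * indicator {a..} y \<partial>lborel)
      = (\<integral>\<^sup>+y. ennreal (exp (-y/lam)/(2*lam)) * indicator {a..} y \<partial>lborel)"
    using a by (intro nn_integral_cong) (auto simp: lap_density_def split: split_indicator)
  also have "\<dots> = ennreal (0 - (- exp (-a/lam)/2))"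
  proof (rule nn_integral_FTC_atLeast)
    show "((\<lambda>x. - exp (-x/lam)/2) \<longlongrightarrow> 0) at_top"
    proof -
      have "((\<lambda>x. - exp (-x/lam)/2) \<longlongrightarrow> - 0/2) at_top"
        apply (intro tendsto_divide tendsto_minus filterlim_compose[OF exp_at_bot])
        using lam by (auto intro!: filterlim_tendsto_neg_mult_at_bot filterlim_ident
             filterlim_at_top_mult_tendsto_pos[OF tendsto_const]
             simp: divide_inverse filterlim_uminus_at_bot mult.commute)
      then show ?thesis by simp
    qed
  qed (use lam in \<open>auto intro!: derivative_eq_intros simp: field_simps\<close>)
  finally show ?thesis by simp
qed

lemma lap_lower:
  assumes lam: "lam > 0" and a: "a \<ge> 0"
  shows "(\<integral>\<^sup>+y. ennreal (lap_density lam y) * indicator {..-a} y \<partial>lborel) = ennreal (exp (-a/lam)/2)"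
proof -
  have "(\<integral>\<^sup>+y. ennreal (lap_density lam y) * indicator {..-a} y \<partial>lborel)
     = ennreal \<bar>-1\<bar> * (\<integral>\<^sup>+y. ennreal (lap_density lam (0 + -1 * y)) * indicator {..-a} (0 + -1*y) \<partial>lborel)"
    by (rule nn_integral_real_affine) auto
  also have "\<dots> = (\<integral>\<^sup>+y. ennreal (lap_density lam y) * indicator {a..} y \<partial>lborel)"
    apply simp
    by (intro nn_integral_cong) (auto simp: lap_density_def split: split_indicator)
  finally show ?thesis using lap_upper[OF assms] by simp
qed

lemma lap_open_upper:
  "(\<integral>\<^sup>+y. f y * indicator {a<..} y \<partial>lborel) = (\<integral>\<^sup>+y. f y * indicator {(a::real)..} y \<partial>lborel)"
  by (intro nn_integral_cong_AE eventually_mono[OF AE_lborel_singleton[of a]]) (auto split: split_indicator simp: not_le not_less)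

lemma one_minus_ennreal: "0 \<le> x \<Longrightarrow> 1 - ennreal x = ennreal (1 - x)"
  by (metis ennreal_1 ennreal_minus)

definition Fl :: "real \<Rightarrow> real \<Rightarrow> real" where
  "Fl lam s = (if s \<le> 0 then exp (s/lam)/2 else 1 - exp (-s/lam)/2)"

lemma emeasure_laplace: "A \<in> sets borel \<Longrightarrow>
   emeasure (laplace lam) A = (\<integral>\<^sup>+y. ennreal (lap_density lam y) * indicator A y \<partial>lborel)"
  unfolding laplace_def by (subst emeasure_density) (auto simp: mult.commute)

lemma sets_laplace[simp]: "sets (laplace lam) = sets borel"
  and space_laplace[simp]: "space (laplace lam) = UNIV"
  by (auto simp: laplace_def)

lemma laplace_prob:
  assumes lam: "lam > 0" shows "prob_space (laplace lam)"
proof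
  have "emeasure (laplace lam) UNIV = (\<integral>\<^sup>+y. ennreal (lap_density lam y) * indicator {..-0} y
     + ennreal (lap_density lam y) * indicator {0<..} y \<partial>lborel)"
    by (subst emeasure_laplace) (auto intro!: nn_integral_cong split: split_indicator)
  also have "\<dots> = ennreal (exp (-0/lam)/2) + ennreal (exp (-0/lam)/2)"
    using lap_lower[OF lam, of 0] lap_upper[OF lam, of 0]
    by (subst nn_integral_add) (auto simp: lap_open_upper)
  also have "\<dots> = 1" by (subst ennreal_plus[symmetric]) auto
  finally show "emeasure (laplace lam) (space (laplace lam)) = 1" by simp
qed

lemma laplace_le:
  assumes lam: "lam > 0" shows "emeasure (laplace lam) {..s} = ennreal (Fl lam s)"
proof (cases "s \<le> 0")
  case True
  then show ?thesis using lap_lower[OF lam, of "-s"] by (simp add: emeasure_laplace Fl_def)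
next
  case False
  interpret prob_space "laplace lam" by (rule laplace_prob[OF lam])
  have "emeasure (laplace lam) {s<..} = ennreal (exp (-s/lam)/2)"
    using False lap_upper[OF lam, of s] by (simp add: emeasure_laplace lap_open_upper)
  moreover have "{..s} = space (laplace lam) - {s<..}" by auto
  ultimately show ?thesis using False
    by (simp add: emeasure_compl emeasure_space_1 one_minus_ennreal Fl_def del: space_laplace)
qed

lemma Fl_bounds:
  assumes lam: "lam > 0" shows "0 < Fl lam s" "Fl lam s < 1"
proof -
  show "0 < Fl lam s"
  proof (cases "s \<le> 0")
    case False
    have "exp (-s/lam) < 1" using lam False by simp
    moreover have "Fl lam s = 1 - exp (-s/lam)/2" using False by (simp add: Fl_def)
    ultimately show ?thesis by linarith
  qed (simp add: Fl_def)
  show "Fl lam s < 1"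
  proof (cases "s \<le> 0")
    case True
    have "exp (s/lam) \<le> 1" using lam True by (simp add: divide_nonpos_pos)
    moreover have "Fl lam s = exp (s/lam)/2" using True by (simp add: Fl_def)
    ultimately show ?thesis by linarith
  next
    case False
    have "0 < exp (-s/lam)" by simp
    moreover have "Fl lam s = 1 - exp (-s/lam)/2" using False by (simp add: Fl_def)
    ultimately show ?thesis by linarith
  qed
qed

lemma laplace_gt:
  assumes lam: "lam > 0" shows "emeasure (laplace lam) {s<..} = ennreal (1 - Fl lam s)"
proof -
  interpret prob_space "laplace lam" by (rule laplace_prob[OF lam])
  have eq: "{s<..} = space (laplace lam) - {..s}" by auto
  have F: "0 \<le> Fl lam s" "Fl lam s \<le> 1"
    using Fl_bounds[OF lam, of s] by auto
  have "emeasure (laplace lam) {s<..} = 1 - ennreal (Fl lam s)"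
    unfolding eq using laplace_le[OF lam, of s]
    by (simp add: emeasure_compl emeasure_space_1 del: space_laplace)
  also have "\<dots> = ennreal (1 - Fl lam s)" using F(1) by (rule one_minus_ennreal)
  finally show ?thesis .
qed




lemma Fl_neg: "Fl lam (-s) = 1 - Fl lam s"
  by (auto simp: Fl_def)

lemma Fl_mono_strict:
  assumes lam: "lam > 0" and ab: "a < b" shows "Fl lam a < Fl lam b"
proof -
  have 1: "exp (a/lam) < exp (b/lam)" using lam ab by (simp add: divide_strict_right_mono)
  have 2: "exp (-b/lam) < exp (-a/lam)" using lam ab by (simp add: divide_strict_right_mono)
  have 3: "exp (a/lam) \<le> 1" if "a \<le> 0" using lam that by (simp add: divide_nonpos_pos)
  have 4: "exp (-b/lam) < 1" if "0 < b" using lam that by simp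
  consider "b \<le> 0" | "a \<le> 0" "0 < b" | "0 < a" using ab by linarith
  then show ?thesis
  proof cases
    case 1
    then show ?thesis using \<open>exp (a/lam) < exp (b/lam)\<close> ab by (simp add: Fl_def)
  next
    case 2
    have "Fl lam a = exp (a/lam)/2" "Fl lam b = 1 - exp (-b/lam)/2" using 2 by (auto simp: Fl_def)
    then show ?thesis using 3[OF 2(1)] 4[OF 2(2)] by linarith
  next
    case 3
    have "Fl lam a = 1 - exp (-a/lam)/2" "Fl lam b = 1 - exp (-b/lam)/2" using 3 ab by (auto simp: Fl_def)
    then show ?thesis using \<open>exp (-b/lam) < exp (-a/lam)\<close> by linarith
  qed
qed

lemma sum_ineq:
  fixes P R Pm Rm u c :: real and m :: nat
  assumes pos: "P > 0" "R > 0" "Pm > 0" "Rm > 0" "u > 0" "c > 0" "m > 0"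
    and key: "P * R > u * Pm * Rm" and c: "c^2 = u^m"
  shows "(P*Rm)^m + (R*Pm)^m > 2 * c * (Pm*Rm)^m"
proof -
  define x where "x = P*Rm"
  define y where "y = R*Pm"
  define z where "z = Pm*Rm"
  have z: "z > 0" using pos by (simp add: z_def)
  have "x * y > u * z^2" using key pos unfolding x_def y_def z_def
    by (simp add: power2_eq_square mult_ac mult_strict_right_mono)
  hence "(u * z^2)^m < (x*y)^m" using pos z by (intro power_strict_mono) auto
  moreover have "(u * z^2)^m = (c * z^m)^2"
    by (simp add: power_mult_distrib c flip: power_mult) (simp add: mult.commute)
  ultimately have XY: "x^m * y^m > (c * z^m)^2"
    by (simp add: power_mult_distrib)
  have Xp: "x^m > 0" "y^m > 0" using pos by (auto simp: x_def y_def)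
  have w: "c * z^m > 0" using pos z by simp
  have "(x^m + y^m)^2 \<ge> 4 * (x^m * y^m)"
  proof -
    have "0 \<le> (x^m - y^m)^2" by simp
    then show ?thesis by (simp add: power2_eq_square algebra_simps)
  qed
  hence "(x^m + y^m)^2 > (2 * (c*z^m))^2" using XY by (simp add: power_mult_distrib)
  hence "x^m + y^m > 2 * (c * z^m)" using Xp w
    by (meson power_less_imp_less_base add_pos_pos less_le)
  then show ?thesis by (simp add: x_def y_def z_def mult_ac)
qed

lemma key_half:
  assumes lam: "lam > 0" and t: "t \<le> 1/2"
  shows "Fl lam t * Fl lam (1-t) > exp (1/lam) * Fl lam (t-1) * Fl lam (-t)"
proof (cases "t \<le> 0")
  case True
  have "Fl lam t = exp (t/lam)/2" "Fl lam (t-1) = exp ((t-1)/lam)/2" using True by (auto simp: Fl_def)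
  moreover have "exp (t/lam) = exp (1/lam) * exp ((t-1)/lam)"
    by (simp add: exp_add[symmetric] add_divide_distrib[symmetric])
  ultimately have e: "Fl lam t = exp (1/lam) * Fl lam (t-1)" by (simp only:)
  have "Fl lam (-t) < Fl lam (1-t)" by (rule Fl_mono_strict[OF lam]) simp
  moreover have "0 < exp (1/lam) * Fl lam (t-1)" using Fl_bounds[OF lam] by simp
  ultimately have "exp (1/lam) * Fl lam (t-1) * Fl lam (-t) < exp (1/lam) * Fl lam (t-1) * Fl lam (1-t)"
    by (rule mult_strict_left_mono)
  then show ?thesis by (simp only: e)
next
  case False
  define x where "x = exp (t/lam)"
  define u where "u = exp (1/lam)"
  have x1: "x > 1" using False lam by (simp add: x_def)
  have "x^2 = exp (2*t/lam)" by (simp add: x_def exp_double[symmetric] power2_eq_square exp_add[symmetric])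
  also have "\<dots> \<le> u" using t lam by (simp add: u_def divide_right_mono)
  finally have xu: "x^2 \<le> u" .
  have xpos: "x > 0" using x1 by simp
  have u0: "u > 0" by (simp add: u_def)
  have F1: "Fl lam t = 1 - 1/(2*x)" using False by (simp add: Fl_def x_def exp_minus field_simps)
  have "(t-1)/lam = t/lam - 1/lam" by (simp add: diff_divide_distrib)
  hence E: "exp ((t-1)/lam) = x/u" by (simp add: x_def u_def exp_diff)
  have G2: "Fl lam (1-t) = 1 - exp ((t-1)/lam)/2"
  proof -
    have "\<not> 1 - t \<le> 0" using t by simp
    hence "Fl lam (1-t) = 1 - exp (-(1-t)/lam)/2" unfolding Fl_def by (simp only: if_False)
    moreover have "-(1-t) = t - 1" by simp
    ultimately show ?thesis by simp
  qed
  have G3: "Fl lam (t-1) = exp ((t-1)/lam)/2"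
  proof -
    have "t - 1 \<le> 0" using t by simp
    thus ?thesis unfolding Fl_def by (simp only: if_True)
  qed
  have F2: "Fl lam (1-t) = 1 - x/(2*u)" unfolding G2 E by simp
  have F3: "Fl lam (t-1) = x/(2*u)" unfolding G3 E by simp
  have F4: "Fl lam (-t) = 1/(2*x)" using False by (simp add: Fl_def x_def exp_minus field_simps)
  have "u * (3*x - 2) \<ge> x^2 * (3*x - 2)" using xu x1 by (intro mult_right_mono) auto
  moreover have "x * (3*x-1) * (x-1) > 0" using x1 by simp
  ultimately have poly: "(2*x-1)*(2*u-x) > x*u" by (simp add: power2_eq_square algebra_simps)
  have "(1 - 1/(2*x)) * (1 - x/(2*u)) - u * (x/(2*u)) * (1/(2*x)) = ((2*x-1)*(2*u-x) - x*u) / (4*x*u)"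
    using xpos u0 by (simp add: field_simps)
  moreover have "((2*x-1)*(2*u-x) - x*u) / (4*x*u) > 0" using poly xpos u0 by simp
  ultimately show ?thesis unfolding F1 F2 F3 F4 u_def[symmetric] by linarith
qed

lemma key_prod:
  assumes lam: "lam > 0"
  shows "Fl lam t * Fl lam (1-t) > exp (1/lam) * Fl lam (t-1) * Fl lam (-t)"
proof (cases "t \<le> 1/2")
  case True then show ?thesis by (rule key_half[OF lam])
next
  case False
  have "Fl lam (1-t) * Fl lam (1-(1-t)) > exp (1/lam) * Fl lam ((1-t)-1) * Fl lam (-(1-t))"
    using False by (intro key_half[OF lam]) auto
  then show ?thesis by (simp add: mult_ac)
qed




lemma prod_shift1: "(\<Prod>j\<in>{1..k}. f j) = (\<Prod>i<k. f (Suc i))"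
proof -
  have "{1..k} = Suc ` {..<k}" by (simp add: image_Suc_lessThan)
  then show ?thesis by (simp add: prod.reindex)
qed

lemma prod_if01: "finite A \<Longrightarrow> (\<Prod>i\<in>A. (if P i then 1 else 0::ennreal)) = (if \<forall>i\<in>A. P i then 1 else 0)"
  by (induction A rule: finite_induct) auto

lemma svt_prob:
  fixes lam :: real and k :: nat and c :: "nat \<Rightarrow> real" and b :: "nat \<Rightarrow> bool" and \<theta> :: real
  assumes lam: "lam > 0"
  defines "N \<equiv> PiM {..k} (\<lambda>_. laplace lam)"
  shows "emeasure N {z \<in> space N. \<forall>i\<in>{..<k}. (c i + z (Suc i) > \<theta> + z 0) = b i}
    = (\<integral>\<^sup>+ y. (\<Prod>i<k. emeasure (laplace lam) {v. (c i + v > \<theta> + y) = b i}) \<partial>laplace lam)"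
proof -
  interpret L: prob_space "laplace lam" by (rule laplace_prob[OF lam])
  interpret P: product_sigma_finite "\<lambda>_::nat. laplace lam"
    by (simp add: product_sigma_finite_def L.sigma_finite_measure_axioms)
  define h where "h y v i = (if (c i + v > \<theta> + y) = b i then 1 else 0 :: ennreal)" for y v i
  have comp: "(\<lambda>z. z j) \<in> borel_measurable N" if "j \<in> {..k}" for j
  proof -
    have "(\<lambda>z. z j) \<in> measurable N (laplace lam)"
      unfolding N_def by (rule measurable_component_singleton[OF that])
    then show ?thesis by (simp add: measurable_def)
  qed
  have hm[measurable]: "(\<lambda>z. h (z 0) (z j) (j - 1)) \<in> borel_measurable N" if "j \<in> {..k}" for j
  proof -
    note [measurable] = comp[OF that] comp[of 0, simplified]
    show ?thesis
      by (cases "b (j - 1)") (simp_all add: h_def)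
  qed
  have hm2: "(\<lambda>v. h y v i) \<in> borel_measurable (laplace lam)" for y i
  proof -
    have "(\<lambda>v. h y v i) \<in> borel_measurable borel"
      by (cases "b i") (simp_all add: h_def)
    then show ?thesis by (simp add: measurable_def)
  qed
  define g where "g z = (\<Prod>j\<in>{1..k}. h (z 0) (z j) (j - 1))" for z
  have gm: "g \<in> borel_measurable N" unfolding g_def
    by (intro borel_measurable_prod_ennreal hm) auto
  have "Measurable.pred N (\<lambda>z. \<forall>i\<in>{..<k}. (c i + z (Suc i) > \<theta> + z 0) = b i)"
  proof (rule pred_intros_finite(3))
    fix i assume i: "i \<in> {..<k}"
    note [measurable] = comp[of "Suc i"] comp[of 0, simplified]
    have "Suc i \<in> {..k}" using i by simp
    then show "Measurable.pred N (\<lambda>z. (c i + z (Suc i) > \<theta> + z 0) = b i)"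
      by (cases "b i") simp_all
  qed simp
  then have Sm: "{z \<in> space N. \<forall>i\<in>{..<k}. (c i + z (Suc i) > \<theta> + z 0) = b i} \<in> sets N"
    by (simp add: pred_def)
  have "emeasure N {z \<in> space N. \<forall>i\<in>{..<k}. (c i + z (Suc i) > \<theta> + z 0) = b i}
      = (\<integral>\<^sup>+ z. g z \<partial>N)"
  proof -
    have "emeasure N {z \<in> space N. \<forall>i\<in>{..<k}. (c i + z (Suc i) > \<theta> + z 0) = b i}
       = (\<integral>\<^sup>+ z. indicator {z \<in> space N. \<forall>i\<in>{..<k}. (c i + z (Suc i) > \<theta> + z 0) = b i} z \<partial>N)"
      using Sm by simp
    also have "\<dots> = (\<integral>\<^sup>+ z. g z \<partial>N)"
    proof (intro nn_integral_cong)
      fix z assume "z \<in> space N"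
      have "g z = (\<Prod>i<k. h (z 0) (z (Suc i)) i)"
        unfolding g_def by (subst prod_shift1) simp
      also have "\<dots> = (if \<forall>i\<in>{..<k}. (c i + z (Suc i) > \<theta> + z 0) = b i then 1 else 0)"
        unfolding h_def by (rule prod_if01) simp 
      finally show "indicator {z \<in> space N. \<forall>i\<in>{..<k}. (c i + z (Suc i) > \<theta> + z 0) = b i} z = g z"
        using \<open>z \<in> space N\<close> by (simp add: indicator_def)
    qed
    finally show ?thesis .
  qed
  also have "\<dots> = (\<integral>\<^sup>+ y. (\<integral>\<^sup>+ x. g (x(0 := y)) \<partial>PiM {1..k} (\<lambda>_. laplace lam)) \<partial>laplace lam)"
  proof -
    have "{..k} = insert 0 {1..k}" by auto
    then show ?thesis unfolding N_def using gm[unfolded N_def]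
      by (simp add: P.product_nn_integral_insert_rev)
  qed
  also have "\<dots> = (\<integral>\<^sup>+ y. (\<Prod>i<k. emeasure (laplace lam) {v. (c i + v > \<theta> + y) = b i}) \<partial>laplace lam)"
  proof (intro nn_integral_cong)
    fix y
    have "(\<integral>\<^sup>+ x. g (x(0 := y)) \<partial>PiM {1..k} (\<lambda>_. laplace lam))
        = (\<integral>\<^sup>+ x. (\<Prod>j\<in>{1..k}. h y (x j) (j - 1)) \<partial>PiM {1..k} (\<lambda>_. laplace lam))"
      unfolding g_def by (intro nn_integral_cong prod.cong) auto
    also have "\<dots> = (\<Prod>j\<in>{1..k}. (\<integral>\<^sup>+ v. h y v (j - 1) \<partial>laplace lam))"
      by (rule P.product_nn_integral_prod) (auto intro: hm2)
    also have "\<dots> = (\<Prod>i<k. (\<integral>\<^sup>+ v. h y v i \<partial>laplace lam))"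
      by (subst prod_shift1) simp
    also have "\<dots> = (\<Prod>i<k. emeasure (laplace lam) {v. (c i + v > \<theta> + y) = b i})"
    proof (intro prod.cong refl)
      fix i
      have "{v. (c i + v > \<theta> + y) = b i} \<in> sets (laplace lam)" by simp
      then show "(\<integral>\<^sup>+ v. h y v i \<partial>laplace lam) = emeasure (laplace lam) {v. (c i + v > \<theta> + y) = b i}"
      proof -
        have "(\<lambda>v. h y v i) = indicator {v. (c i + v > \<theta> + y) = b i}"
          by (auto simp: h_def indicator_def fun_eq_iff)
        then show ?thesis using \<open>{v. (c i + v > \<theta> + y) = b i} \<in> sets (laplace lam)\<close>
          by (simp del: sets_laplace)
      qed
    qed
    finally show "(\<integral>\<^sup>+ x. g (x(0 := y)) \<partial>PiM {1..k} (\<lambda>_. laplace lam)) = \<dots>" .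
  qed
  finally show ?thesis .
qed

lemma svt_sets:
  fixes lam :: real and k :: nat and c :: "nat \<Rightarrow> real" and b :: "nat \<Rightarrow> bool" and \<theta> :: real
  defines "N \<equiv> PiM {..k} (\<lambda>_. laplace lam)"
  shows "{z \<in> space N. \<forall>i\<in>{..<k}. (c i + z (Suc i) > \<theta> + z 0) = b i} \<in> sets N"
proof -
  have comp: "(\<lambda>z. z j) \<in> borel_measurable N" if "j \<in> {..k}" for j
  proof -
    have "(\<lambda>z. z j) \<in> measurable N (laplace lam)"
      unfolding N_def by (rule measurable_component_singleton[OF that])
    then show ?thesis by (simp add: measurable_def)
  qed
  have "Measurable.pred N (\<lambda>z. \<forall>i\<in>{..<k}. (c i + z (Suc i) > \<theta> + z 0) = b i)"
  proof (rule pred_intros_finite(3))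
    fix i assume i: "i \<in> {..<k}"
    note [measurable] = comp[of "Suc i"] comp[of 0, simplified]
    have "Suc i \<in> {..k}" using i by simp
    then show "Measurable.pred N (\<lambda>z. (c i + z (Suc i) > \<theta> + z 0) = b i)"
      by (cases "b i") simp_all
  qed simp
  then show ?thesis by (simp add: pred_def)
qed




lemma svt_preimage:
  "svt_output Q \<theta> X -` {out} \<inter> space N =
     (if length out = length Q then {z \<in> space N. \<forall>i\<in>{..<length Q}.
        (counting_query (Q!i) X + z (Suc i) > \<theta> + z 0) = out!i} else {})"
proof -
  have "svt_output Q \<theta> X z = out \<longleftrightarrow> length out = length Q \<and> (\<forall>i\<in>{..<length Q}.
        (counting_query (Q!i) X + z (Suc i) > \<theta> + z 0) = out!i)" for z
    unfolding svt_output_def list_eq_iff_nth_eq by (auto simp del: upt_Suc)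
  then show ?thesis by auto
qed

lemma measure_svt:
  assumes lam: "lam > 0" and len: "length out = length Q"
  shows "measure (binary_svt X Q \<theta> lam) {out} = enn2real (\<integral>\<^sup>+ y. (\<Prod>i<length Q.
     emeasure (laplace lam) {v. (counting_query (Q!i) X + v > \<theta> + y) = out!i}) \<partial>laplace lam)"
proof -
  define N where "N = PiM {..length Q} (\<lambda>_. laplace lam)"
  have meas: "svt_output Q \<theta> X \<in> measurable N (count_space UNIV)"
    unfolding measurable_count_space_eq2_countable
  proof (intro conjI ballI)
    fix a :: "bool list"
    show "svt_output Q \<theta> X -` {a} \<inter> space N \<in> sets N"
      unfolding svt_preimage using svt_sets[where lam=lam and k="length Q"] by (simp add: N_def)
  qed simp
  have "measure (binary_svt X Q \<theta> lam) {out} = measure N (svt_output Q \<theta> X -` {out} \<inter> space N)"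
    unfolding binary_svt_def N_def[symmetric] by (rule measure_distr[OF meas]) simp
  also have "\<dots> = enn2real (emeasure N {z \<in> space N. \<forall>i\<in>{..<length Q}.
        (counting_query (Q!i) X + z (Suc i) > \<theta> + z 0) = out!i})"
    unfolding svt_preimage using len by (simp add: measure_def)
  also have "\<dots> = enn2real (\<integral>\<^sup>+ y. (\<Prod>i<length Q.
     emeasure (laplace lam) {v. (counting_query (Q!i) X + v > \<theta> + y) = out!i}) \<partial>laplace lam)"
    unfolding N_def by (subst svt_prob[OF lam]) simp
  finally show ?thesis .
qed

lemma emeasure_halfset:
  assumes lam: "lam > 0"
  shows "emeasure (laplace lam) {v. (c + v > s) = bb} = ennreal (if bb then 1 - Fl lam (s-c) else Fl lam (s-c))"
proof (cases bb)
  case True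
  have "{v. (c + v > s) = bb} = {s-c<..}" using True by auto
  then show ?thesis using True laplace_gt[OF lam] by simp
next
  case False
  have "{v. (c + v > s) = bb} = {..s-c}" using False by auto
  then show ?thesis using False laplace_le[OF lam] by simp
qed

lemma prod_split: "(\<Prod>i<m+m. if i<m then A else B) = (A::'b::comm_monoid_mult)^m * B^m"
proof -
  have "(\<Prod>i<m+m. if i<m then A else B) = (\<Prod>i\<in>{0..<m}. if i<m then A else B) * (\<Prod>i\<in>{m..<m+m}. if i<m then A else B)"
    unfolding lessThan_atLeast0 by (rule prod.atLeastLessThan_concat[symmetric]) auto
  also have "\<dots> = (\<Prod>i\<in>{0..<m}. A) * (\<Prod>i\<in>{m..<m+m}. B)"
    by (intro arg_cong2[where f="(*)"] prod.cong) auto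
  finally show ?thesis by simp
qed




lemma Fl_meas[measurable]: "Fl lam \<in> borel_measurable borel"
  unfolding Fl_def by measurable

lemma nn_integral_laplace:
  assumes g: "g \<in> borel_measurable borel" and lam: "lam > 0" and nn: "\<And>y. g y \<ge> 0"
  shows "(\<integral>\<^sup>+ y. ennreal (g y) \<partial>laplace lam) = (\<integral>\<^sup>+ y. ennreal (lap_density lam y * g y) \<partial>lborel)"
  unfolding laplace_def
  by (subst nn_integral_density) (auto simp: g ennreal_mult lap_density_nonneg[OF lam] nn)

lemma nn_integral_reflect:
  fixes f :: "real \<Rightarrow> real"
  assumes f[measurable]: "f \<in> borel_measurable borel"
  shows "(\<integral>\<^sup>+ y. ennreal (f y) \<partial>lborel) = (\<integral>\<^sup>+ y. ennreal (f (-y)) \<partial>lborel)"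
proof -
  have "(\<integral>\<^sup>+ y. ennreal (f y) \<partial>lborel) = ennreal \<bar>-1\<bar> * (\<integral>\<^sup>+ y. ennreal (f (0 + -1 * y)) \<partial>lborel)"
    apply (rule nn_integral_real_affine)
     apply measurable
    done
  then show ?thesis by simp
qed

lemma nn_integral_pos_lborel:
  fixes f :: "real \<Rightarrow> real"
  assumes f[measurable]: "f \<in> borel_measurable borel" and pos: "\<And>y. f y > 0"
  shows "(\<integral>\<^sup>+ y. ennreal (f y) \<partial>lborel) > 0"
proof (rule ccontr)
  assume "\<not> ?thesis"
  then have "(\<integral>\<^sup>+ y. ennreal (f y) \<partial>lborel) = 0" by simp
  then have "AE y in lborel. ennreal (f y) = 0"
    by (subst (asm) nn_integral_0_iff_AE) (auto simp: f)
  then have "AE y in (lborel::real measure). False" using pos by (auto elim!: eventually_mono) (metis ennreal_eq_0_iff not_le)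
  then obtain N where N: "{x \<in> space (lborel::real measure). \<not> False} \<subseteq> N" "emeasure lborel N = 0"
    by (rule AE_E)
  then have "N = UNIV" by auto
  then show False using N by simp
qed

lemma pointwise:
  fixes lam :: real and m :: nat and y :: real
  assumes lam: "lam > 0" and m: "m > 0"
  defines "G \<equiv> \<lambda>y. Fl lam (y + 1/2)^m * (1 - Fl lam (y + 1/2))^m"
  defines "H \<equiv> \<lambda>y. Fl lam (y - 1/2)^m * (1 - Fl lam (y + 1/2))^m"
  shows "G y + G (-y) > 2 * exp (m/(2*lam)) * H y" and "H (-y) = H y"
proof -
  define t where "t = y + 1/2"
  define P where "P = Fl lam t"
  define R where "R = Fl lam (1-t)"
  define Pm where "Pm = Fl lam (t-1)"
  define Rm where "Rm = Fl lam (-t)"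
  have G1: "G y = (P*Rm)^m"
    unfolding G_def P_def Rm_def t_def Fl_neg by (simp add: power_mult_distrib)
  have G2: "G (-y) = (R*Pm)^m"
  proof -
    have "1 - Fl lam (1-t) = Fl lam (t-1)" using Fl_neg[of lam "1-t"] by simp
    then show ?thesis unfolding G_def R_def Pm_def t_def by (simp add: power_mult_distrib)
  qed
  have H1: "H y = (Pm*Rm)^m"
    unfolding H_def Pm_def Rm_def t_def Fl_neg by (simp add: power_mult_distrib)
  have H2: "H (-y) = (Pm*Rm)^m"
  proof -
    have "1 - Fl lam (1-t) = Fl lam (t-1)" using Fl_neg[of lam "1-t"] by simp
    have a1: "Fl lam (-y - 1/2) = Fl lam (-t)" by (rule arg_cong[where f="Fl lam"]) (simp add: t_def)
    have a2: "Fl lam (-y + 1/2) = Fl lam (1-t)" by (rule arg_cong[where f="Fl lam"]) (simp add: t_def)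
    have "H (-y) = Fl lam (-y - 1/2)^m * (1 - Fl lam (-y + 1/2))^m" by (simp add: H_def)
    also have "\<dots> = Rm^m * Pm^m" unfolding a1 a2 \<open>1 - Fl lam (1-t) = Fl lam (t-1)\<close> Rm_def Pm_def ..
    finally show ?thesis by (simp add: power_mult_distrib mult.commute)
  qed
  show "H (-y) = H y" using H1 H2 by simp
  have c: "exp (m/(2*lam))^2 = exp (1/lam)^m"
    by (simp add: exp_of_nat_mult[symmetric] power2_eq_square exp_add[symmetric])
  have "(P*Rm)^m + (R*Pm)^m > 2 * exp (m/(2*lam)) * (Pm*Rm)^m"
    using Fl_bounds[OF lam] key_prod[OF lam, of t] m c
    by (intro sum_ineq) (auto simp: P_def R_def Pm_def Rm_def mult_ac)
  then show "G y + G (-y) > 2 * exp (m/(2*lam)) * H y" using G1 G2 H1 by simp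
qed

lemma main_ineq:
  fixes lam eps :: real and m :: nat and x :: 'a
  assumes lam: "lam > 0" and m: "m > 0" and eps: "eps \<le> m/(2*lam)"
  shows "measure (binary_svt {#} (replicate m (\<lambda>_::'a. True) @ replicate m (\<lambda>_. False)) (1/2) lam) {replicate m False @ replicate m True}
     > exp eps * measure (binary_svt {#x#} (replicate m (\<lambda>_::'a. True) @ replicate m (\<lambda>_. False)) (1/2) lam) {replicate m False @ replicate m True}"
proof -
  define Q :: "('a \<Rightarrow> bool) list" where "Q = replicate m (\<lambda>_. True) @ replicate m (\<lambda>_. False)"
  define out where "out = replicate m False @ replicate m True"
  define G where "G = (\<lambda>y. Fl lam (y + 1/2)^m * (1 - Fl lam (y + 1/2))^m)"
  define H where "H = (\<lambda>y. Fl lam (y - 1/2)^m * (1 - Fl lam (y + 1/2))^m)"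
  define p where "p = lap_density lam"
  have lenQ: "length Q = m+m" and len: "length out = length Q" by (simp_all add: Q_def out_def)
  have Qi: "Q!i = (if i<m then (\<lambda>_. True) else (\<lambda>_. False))" if "i<m+m" for i
    using that by (simp add: Q_def nth_append)
  have outi: "out!i = (\<not> i<m)" if "i<m+m" for i using that by (simp add: out_def nth_append)
  have Fb: "0 \<le> Fl lam s" "0 \<le> 1 - Fl lam s" "Fl lam s \<le> 1" "1 - Fl lam s \<le> 1" for s
    using Fl_bounds[OF lam, of s] by auto
  have E1: "measure (binary_svt {#} Q (1/2) lam) {out} = enn2real (\<integral>\<^sup>+ y. ennreal (G y) \<partial>laplace lam)"
  proof -
    have "(\<Prod>i<length Q. emeasure (laplace lam) {v. (counting_query (Q!i) {#} + v > 1/2 + y) = out!i}) = ennreal (G y)" for y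
    proof -
      have "(\<Prod>i<length Q. emeasure (laplace lam) {v. (counting_query (Q!i) {#} + v > 1/2 + y) = out!i})
          = (\<Prod>i<m+m. if i<m then ennreal (Fl lam (1/2+y)) else ennreal (1 - Fl lam (1/2+y)))"
        unfolding lenQ by (intro prod.cong refl, subst emeasure_halfset[OF lam]) (simp add: Qi outi counting_query_def)
      also have "\<dots> = ennreal (Fl lam (1/2+y))^m * ennreal (1 - Fl lam (1/2+y))^m" by (rule prod_split)
      also have "\<dots> = ennreal (G y)" using Fb by (simp add: G_def ennreal_power ennreal_mult add.commute)
      finally show ?thesis .
    qed
    then show ?thesis using measure_svt[OF lam len, of "{#}" "1/2"] by simp
  qed
  have E2: "measure (binary_svt {#x#} Q (1/2) lam) {out} = enn2real (\<integral>\<^sup>+ y. ennreal (H y) \<partial>laplace lam)"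
  proof -
    have "(\<Prod>i<length Q. emeasure (laplace lam) {v. (counting_query (Q!i) {#x#} + v > 1/2 + y) = out!i}) = ennreal (H y)" for y
    proof -
      have "(\<Prod>i<length Q. emeasure (laplace lam) {v. (counting_query (Q!i) {#x#} + v > 1/2 + y) = out!i})
          = (\<Prod>i<m+m. if i<m then ennreal (Fl lam (1/2+y-1)) else ennreal (1 - Fl lam (1/2+y)))"
        unfolding lenQ by (intro prod.cong refl, subst emeasure_halfset[OF lam]) (simp add: Qi outi counting_query_def)
      also have "\<dots> = ennreal (Fl lam (1/2+y-1))^m * ennreal (1 - Fl lam (1/2+y))^m" by (rule prod_split)
      also have "\<dots> = ennreal (H y)"
      proof -
        have "1/2+y-1 = y - 1/2" by simp
        then show ?thesis using Fb by (simp add: H_def ennreal_power ennreal_mult add.commute)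
      qed
      finally show ?thesis .
    qed
    then show ?thesis using measure_svt[OF lam len, of "{#x#}" "1/2"] by simp
  qed
  have Gm[measurable]: "G \<in> borel_measurable borel" unfolding G_def by measurable
  have Hm[measurable]: "H \<in> borel_measurable borel" unfolding H_def by measurable
  have pm[measurable]: "p \<in> borel_measurable borel" unfolding p_def by measurable
  have G0: "G y \<ge> 0" "G y \<le> 1" for y using Fb by (auto simp: G_def mult_le_one power_le_one)
  have H0: "H y \<ge> 0" "H y \<le> 1" for y using Fb by (auto simp: H_def mult_le_one power_le_one)
  have p0: "p y > 0" for y using lam by (simp add: p_def lap_density_def)
  have p0': "p y \<ge> 0" for y using p0[of y] by simp
  have psym: "p (-y) = p y" for y by (simp add: p_def lap_density_def)
  interpret L: prob_space "laplace lam" by (rule laplace_prob[OF lam])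
  define IA where "IA = (\<integral>\<^sup>+ y. ennreal (G y) \<partial>laplace lam)"
  define IB where "IB = (\<integral>\<^sup>+ y. ennreal (H y) \<partial>laplace lam)"
  have IA_le: "IA \<le> 1"
  proof -
    have "IA \<le> (\<integral>\<^sup>+ y. 1 \<partial>laplace lam)" unfolding IA_def
      by (intro nn_integral_mono) (simp add: G0)
    then show ?thesis using L.emeasure_space_1 by simp
  qed
  have IB_le: "IB \<le> 1"
  proof -
    have "IB \<le> (\<integral>\<^sup>+ y. 1 \<partial>laplace lam)" unfolding IB_def
      by (intro nn_integral_mono) (simp add: H0)
    then show ?thesis using L.emeasure_space_1 by simp
  qed
  have IA': "IA = (\<integral>\<^sup>+ y. ennreal (p y * G y) \<partial>lborel)"
    unfolding IA_def p_def by (rule nn_integral_laplace[OF Gm lam G0(1)])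
  have IB': "IB = (\<integral>\<^sup>+ y. ennreal (p y * H y) \<partial>lborel)"
    unfolding IB_def p_def by (rule nn_integral_laplace[OF Hm lam H0(1)])
  have IA2: "IA + IA = (\<integral>\<^sup>+ y. ennreal (p y * G y + p y * G (-y)) \<partial>lborel)"
  proof -
    have "IA = (\<integral>\<^sup>+ y. ennreal (p (-y) * G (-y)) \<partial>lborel)"
      unfolding IA' by (rule nn_integral_reflect) measurable
    then have "IA = (\<integral>\<^sup>+ y. ennreal (p y * G (-y)) \<partial>lborel)" by (simp add: psym)
    then have "IA + IA = (\<integral>\<^sup>+ y. ennreal (p y * G y) \<partial>lborel) + (\<integral>\<^sup>+ y. ennreal (p y * G (-y)) \<partial>lborel)"
      using IA' by simp
    also have "\<dots> = (\<integral>\<^sup>+ y. ennreal (p y * G y) + ennreal (p y * G (-y)) \<partial>lborel)"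
      by (rule nn_integral_add[symmetric]) auto
    also have "\<dots> = (\<integral>\<^sup>+ y. ennreal (p y * G y + p y * G (-y)) \<partial>lborel)"
      by (intro nn_integral_cong ennreal_plus[symmetric]) (use p0' G0 in \<open>auto intro!: mult_nonneg_nonneg\<close>)
    finally show ?thesis .
  qed
  have IB2: "IB + IB = (\<integral>\<^sup>+ y. ennreal (p y * H y + p y * H y) \<partial>lborel)"
  proof -
    have "IB + IB = (\<integral>\<^sup>+ y. ennreal (p y * H y) + ennreal (p y * H y) \<partial>lborel)"
      unfolding IB' by (rule nn_integral_add[symmetric]) auto
    also have "\<dots> = (\<integral>\<^sup>+ y. ennreal (p y * H y + p y * H y) \<partial>lborel)"
      by (intro nn_integral_cong ennreal_plus[symmetric]) (use p0' H0 in \<open>auto intro!: mult_nonneg_nonneg\<close>)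
    finally show ?thesis .
  qed
  define c0 where "c0 = exp (m/(2*lam))"
  have c0: "c0 > 0" by (simp add: c0_def)
  define d where "d y = p y * G y + p y * G (-y) - c0 * (p y * H y + p y * H y)" for y
  have dpos: "d y > 0" for y
  proof -
    have "G y + G (-y) > 2 * c0 * H y"
      using pointwise(1)[OF lam m, of y] unfolding G_def H_def c0_def by simp
    then have "p y * (G y + G (-y)) > p y * (2 * c0 * H y)" using p0 by (rule mult_strict_left_mono)
    then show ?thesis by (simp add: d_def algebra_simps)
  qed
  have dm[measurable]: "d \<in> borel_measurable borel" unfolding d_def by measurable
  define Dp where "Dp = (\<integral>\<^sup>+ y. ennreal (d y) \<partial>lborel)"
  have Dp_pos: "Dp > 0" unfolding Dp_def by (rule nn_integral_pos_lborel[OF dm dpos])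
  have eq: "IA + IA = ennreal c0 * (IB + IB) + Dp"
  proof -
    have "IA + IA = (\<integral>\<^sup>+ y. ennreal (c0 * (p y * H y + p y * H y) + d y) \<partial>lborel)"
      unfolding IA2 by (intro nn_integral_cong) (simp add: d_def)
    also have "\<dots> = (\<integral>\<^sup>+ y. ennreal (c0 * (p y * H y + p y * H y)) + ennreal (d y) \<partial>lborel)"
      by (intro nn_integral_cong ennreal_plus) (use p0' H0 c0 dpos in \<open>auto intro!: mult_nonneg_nonneg add_nonneg_nonneg less_imp_le\<close>)
    also have "\<dots> = (\<integral>\<^sup>+ y. ennreal (c0 * (p y * H y + p y * H y)) \<partial>lborel) + Dp"
      unfolding Dp_def by (rule nn_integral_add) auto
    also have "(\<integral>\<^sup>+ y. ennreal (c0 * (p y * H y + p y * H y)) \<partial>lborel)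
        = (\<integral>\<^sup>+ y. ennreal c0 * ennreal (p y * H y + p y * H y) \<partial>lborel)"
      by (intro nn_integral_cong ennreal_mult) (use p0' H0 c0 in \<open>auto intro!: mult_nonneg_nonneg add_nonneg_nonneg\<close>)
    also have "\<dots> = ennreal c0 * (IB + IB)"
      unfolding IB2 by (rule nn_integral_cmult) auto
    finally show ?thesis .
  qed
  define a where "a = enn2real IA"
  define b where "b = enn2real IB"
  define dd where "dd = enn2real Dp"
  have IAa: "IA = ennreal a" unfolding a_def using IA_le by (intro ennreal_enn2real[symmetric]) (metis ennreal_1 ennreal_less_top le_less_trans)
  have IBb: "IB = ennreal b" unfolding b_def using IB_le by (intro ennreal_enn2real[symmetric]) (metis ennreal_1 ennreal_less_top le_less_trans)
  have Dp_fin: "Dp < \<top>"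
  proof -
    have "Dp \<le> IA + IA" using eq by simp
    also have "\<dots> < \<top>" using IAa by (simp flip: ennreal_plus)
    finally show ?thesis .
  qed
  have Dpd: "Dp = ennreal dd" unfolding dd_def using Dp_fin by (intro ennreal_enn2real[symmetric]) auto
  have a0: "a \<ge> 0" "b \<ge> 0" "dd \<ge> 0" by (simp_all add: a_def b_def dd_def)
  have dd0: "dd > 0" using Dp_pos Dpd by simp
  have "ennreal (a + a) = ennreal (c0 * (b + b) + dd)"
    using eq unfolding IAa IBb Dpd using a0 c0
    by (simp add: ennreal_plus[symmetric] ennreal_mult[symmetric] del: ennreal_plus)
  then have "a + a = c0 * (b + b) + dd" using a0 c0 by (subst (asm) ennreal_inj) auto
  then have "a > c0 * b" using dd0 by (simp add: algebra_simps)
  moreover have "exp eps * b \<le> c0 * b"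
    using eps a0 unfolding c0_def by (intro mult_right_mono) auto
  ultimately have "a > exp eps * b" by linarith
  then show ?thesis using E1 E2 unfolding a_def b_def IA_def IB_def Q_def out_def by simp
qed


theorem lemma5:
  fixes eps :: real and k :: nat
  assumes "eps > 0" and "k \<ge> 2" and "even k"
  shows "\<exists>(\<theta>::real) (Q :: ('a \<Rightarrow> bool) list) (D :: 'a multiset) D'.
           length Q = k \<and> neighboring D D' \<and>
           (\<forall>lam. 0 < lam \<and> lam \<le> real k / (4 * eps) \<longrightarrow>
              \<not> differentially_private (\<lambda>X. binary_svt X Q \<theta> lam) eps \<and>
              (\<exists>out. measure (binary_svt D Q \<theta> lam) {out} > exp eps * measure (binary_svt D' Q \<theta> lam) {out}))"
proof -
  from \<open>even k\<close> obtain m where k: "k = m + m" by (metis evenE mult_2)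
  have m: "m > 0" using \<open>k \<ge> 2\<close> k by simp
  define Q :: "('a \<Rightarrow> bool) list" where "Q = replicate m (\<lambda>_. True) @ replicate m (\<lambda>_. False)"
  define out where "out = replicate m False @ replicate m True"
  have ineq: "measure (binary_svt {#} Q (1/2) lam) {out} > exp eps * measure (binary_svt {#undefined#} Q (1/2) lam) {out}"
    if lam: "0 < lam" and le: "lam \<le> real k / (4 * eps)" for lam
  proof -
    have "lam * (4 * eps) \<le> real k" using le \<open>eps > 0\<close> by (simp add: le_divide_eq)
    then have "eps * (2 * lam) \<le> real m" using k by (simp add: algebra_simps)
    then have "eps \<le> real m / (2 * lam)" using lam by (simp add: le_divide_eq)
    from main_ineq[OF lam m this, of undefined] show ?thesis by (simp add: Q_def out_def)
  qed
  show ?thesis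
  proof (rule exI[of _ "1/2"], rule exI[of _ Q], rule exI[of _ "{#}"], rule exI[of _ "{#undefined#}"],
         intro conjI allI impI)
    show "length Q = k" using k by (simp add: Q_def)
    show "neighboring {#} {#undefined#}" by (auto simp: neighboring_def)
  next
    fix lam assume a: "0 < lam \<and> lam \<le> real k / (4 * eps)"
    then have i: "measure (binary_svt {#} Q (1/2) lam) {out} > exp eps * measure (binary_svt {#undefined#} Q (1/2) lam) {out}"
      using ineq by blast
    then show "\<exists>out. measure (binary_svt {#} Q (1/2) lam) {out} > exp eps * measure (binary_svt {#undefined#} Q (1/2) lam) {out}"
      by blast
    show "\<not> differentially_private (\<lambda>X. binary_svt X Q (1/2) lam) eps"
      unfolding differentially_private_def
    proof
      assume "\<forall>D D' out. neighboring D D' \<longrightarrow> measure (binary_svt D Q (1/2) lam) {out} \<le> exp eps * measure (binary_svt D' Q (1/2) lam) {out}"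
      moreover have "neighboring {#} {#undefined#}" by (auto simp: neighboring_def)
      ultimately have "measure (binary_svt {#} Q (1/2) lam) {out} \<le> exp eps * measure (binary_svt {#undefined#} Q (1/2) lam) {out}"
        by blast
      then show False using i by linarith
    qed
  qed
qed

end
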